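(* If $K$ is a smooth convex domain, then its depth satisfies $h_K>0$.
   Context: A convex domain is a compact convex subset $K\subset\mathbb{C}$ with nonempty interior; it is smooth if at each boundary point there is a unique supporting line. A unit vector $\nu$ is an outer normal to $K$ at $\zeta\in\partial K$ if $\mathrm{Re}((z-\zeta)\overline{\nu})\le 0$ for all $z\in K$; then $(\zeta+\nu\mathbb{R})\cap K=[\zeta,\zeta-h\nu]$ with $h\ge0$. The local depth $h_K(\zeta)$ is the maximum of such $h$ over all outer unit normals at $\zeta$, and the depth is $h_K:=\inf_{\zeta\in\partial K}h_K(\zeta)$. *)

theory Defs
  imports "HOL-Analysis.Analysis"
begin

definition convex_domain :: "complex set \<Rightarrow> bool" where
  "convex_domain K \<longleftrightarrow> compact K \<and> convex K \<and> interior K \<noteq> {}"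

definition supporting_line :: "complex set \<Rightarrow> complex \<Rightarrow> complex set \<Rightarrow> bool" where
  "supporting_line K \<zeta> L \<longleftrightarrow>
     (\<exists>\<nu>. norm \<nu> = 1 \<and> L = {z. Re ((z - \<zeta>) * cnj \<nu>) = 0} \<and>
          (\<forall>z\<in>K. Re ((z - \<zeta>) * cnj \<nu>) \<le> 0))"

definition smooth_convex_domain :: "complex set \<Rightarrow> bool" where
  "smooth_convex_domain K \<longleftrightarrow> convex_domain K \<and>
     (\<forall>\<zeta>\<in>frontier K. \<exists>!L. supporting_line K \<zeta> L)"

definition outer_normal :: "complex set \<Rightarrow> complex \<Rightarrow> complex \<Rightarrow> bool" where
  "outer_normal K \<zeta> \<nu> \<longleftrightarrow> norm \<nu> = 1 \<and> (\<forall>z\<in>K. Re ((z - \<zeta>) * cnj \<nu>) \<le> 0)"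

definition local_depth :: "complex set \<Rightarrow> complex \<Rightarrow> real" where
  "local_depth K \<zeta> = Sup {h. h \<ge> 0 \<and> (\<exists>\<nu>. outer_normal K \<zeta> \<nu> \<and>
      {\<zeta> + complex_of_real t * \<nu> | t. True} \<inter> K = closed_segment \<zeta> (\<zeta> - complex_of_real h * \<nu>))}"

definition depth :: "complex set \<Rightarrow> real" where
  "depth K = Inf (local_depth K ` frontier K)"

end

theory Submission
  imports Defs
begin

lemma re_cnj_inner: "Re (w * cnj a) = inner w a"
  by (simp add: inner_complex_def)

lemma basic:
  assumes "smooth_convex_domain K"
  shows "compact K" "convex K" "interior K \<noteq> {}" "closed K" "bounded K"
    "\<And>\<zeta>. \<zeta> \<in> frontier K \<Longrightarrow> \<zeta> \<in> K \<and> \<zeta> \<notin> interior K"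
  using assms unfolding smooth_convex_domain_def convex_domain_def
  by (auto simp: compact_imp_closed compact_imp_bounded frontier_def closure_closed)

lemma key:
  assumes sm: "smooth_convex_domain K" and zf: "\<zeta> \<in> frontier K" and on: "outer_normal K \<zeta> \<mu>"
  shows "\<exists>s>0. \<zeta> - of_real s * \<mu> \<in> interior K"
proof (rule ccontr)
  assume H: "\<not> ?thesis"
  note b = basic[OF sm]
  have zK: "\<zeta> \<in> K" and zni: "\<zeta> \<notin> interior K" using b(6)[OF zf] by auto
  have mu1: "norm \<mu> = 1" and muK: "\<forall>z\<in>K. Re ((z - \<zeta>) * cnj \<mu>) \<le> 0"
    using on by (auto simp: outer_normal_def)
  define R where "R = {\<zeta> - of_real t * \<mu> | t. t \<ge> 0}"
  have cR: "convex R"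
    unfolding convex_def R_def
  proof (clarify)
    fix t1 t2 :: real and u v :: real
    assume "0 \<le> t1" "0 \<le> t2" "0 \<le> u" "0 \<le> v" "u + v = 1"
    then have v: "v = 1 - u" by simp
    show "\<exists>t. u *\<^sub>R (\<zeta> - of_real t1 * \<mu>) + v *\<^sub>R (\<zeta> - of_real t2 * \<mu>) = \<zeta> - of_real t * \<mu> \<and> 0 \<le> t"
      using \<open>0 \<le> t1\<close> \<open>0 \<le> t2\<close> \<open>0 \<le> u\<close> \<open>0 \<le> v\<close>
      by (intro exI[of _ "u * t1 + v * t2"]) (auto simp: v scaleR_conv_of_real algebra_simps, smt (verit) mult_nonneg_nonneg mult_left_le)
  qed
  have zR: "\<zeta> \<in> R" unfolding R_def by (auto intro!: exI[of _ 0])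
  have zmR: "\<zeta> - \<mu> \<in> R" unfolding R_def by (auto intro!: exI[of _ 1])
  have dis: "interior K \<inter> R = {}"
  proof -
    { fix t :: real assume "t \<ge> 0" "\<zeta> - of_real t * \<mu> \<in> interior K"
      then have False using H zni by (cases "t = 0") auto }
    then show ?thesis unfolding R_def by auto
  qed
  obtain a b where a0: "a \<noteq> 0" and aI: "\<forall>x\<in>interior K. inner a x \<le> b" and aR: "\<forall>x\<in>R. inner a x \<ge> b"
    using separating_hyperplane_sets[OF convex_interior[OF b(2)] cR b(3)] zR dis by blast
  have "closure (interior K) \<subseteq> {x. inner a x \<le> b}"
    using aI by (intro closure_minimal) (auto simp: closed_halfspace_le)
  then have aK: "\<forall>x\<in>K. inner a x \<le> b"
    using convex_closure_interior[OF b(2) b(3)] closure_subset by blast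
  have az: "inner a \<zeta> = b" using aK aR zR zK by force
  have amu: "inner a \<mu> \<le> 0" using aR zmR az by (auto simp: inner_diff_right)
  define \<nu> where "\<nu> = a / of_real (norm a)"
  have nre: "Re (w * cnj \<nu>) = inner w a / norm a" for w
    by (simp add: \<nu>_def inner_complex_def)
  have nu1: "norm \<nu> = 1" using a0 by (simp add: \<nu>_def norm_divide)
  have nuK: "\<forall>z\<in>K. Re ((z - \<zeta>) * cnj \<nu>) \<le> 0"
  proof
    fix z assume "z \<in> K"
    then have "inner a z \<le> b" using aK by blast
    then have "inner (z - \<zeta>) a \<le> 0" using az by (metis inner_diff_left inner_commute diff_le_0_iff_le)
    then show "Re ((z - \<zeta>) * cnj \<nu>) \<le> 0" unfolding nre by (simp add: divide_le_0_iff)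
  qed
  have s1: "supporting_line K \<zeta> {z. Re ((z - \<zeta>) * cnj \<mu>) = 0}"
    unfolding supporting_line_def using mu1 muK by blast
  have s2: "supporting_line K \<zeta> {z. Re ((z - \<zeta>) * cnj \<nu>) = 0}"
    unfolding supporting_line_def using nu1 nuK by blast
  have "\<exists>!L. supporting_line K \<zeta> L" using sm zf by (auto simp: smooth_convex_domain_def)
  then have eq: "{z. Re ((z - \<zeta>) * cnj \<mu>) = 0} = {z. Re ((z - \<zeta>) * cnj \<nu>) = 0}"
    using s1 s2 by blast
  have "\<zeta> + \<i> * \<mu> \<in> {z. Re ((z - \<zeta>) * cnj \<mu>) = 0}" by simp
  then have "\<zeta> + \<i> * \<mu> \<in> {z. Re ((z - \<zeta>) * cnj \<nu>) = 0}" using eq by (simp only:)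
  then have c1: "Re (\<i> * \<mu> * cnj \<nu>) = 0" by (simp only: mem_Collect_eq add_diff_cancel_left')
  have c2: "Re (\<mu> * cnj \<nu>) \<le> 0" unfolding nre using amu by (simp add: inner_commute divide_le_0_iff)
  define p where "p = Re \<mu>" define q where "q = Im \<mu>" define r where "r = Re \<nu>" define s where "s = Im \<nu>"
  have e1: "p^2 + q^2 = 1" using mu1 by (simp add: p_def q_def norm_complex_def)
  have e2: "r^2 + s^2 = 1" using nu1 by (simp add: r_def s_def norm_complex_def)
  have e3: "q * r - p * s = 0" using c1 by (simp add: p_def q_def r_def s_def algebra_simps)
  have e4: "p * r + q * s \<le> 0" using c2 by (simp add: p_def q_def r_def s_def)
  have "(p * r + q * s)^2 = (p^2+q^2)*(r^2+s^2) - (q * r - p * s)^2" by (simp add: power2_eq_square algebra_simps)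
  then have "(p * r + q * s)^2 = 1" using e1 e2 e3 by simp
  then have "p * r + q * s = 1 \<or> p * r + q * s = -1" by (simp only: power2_eq_1_iff)
  then have "p * r + q * s = -1" using e4 by linarith
  then have "(r+p)^2 + (s+q)^2 = 0" using e1 e2 by (simp add: power2_eq_square algebra_simps)
  then have "r + p = 0 \<and> s + q = 0" by (simp add: sum_power2_eq_zero_iff)
  then have "r = -p" "s = -q" by auto
  then have nmu: "\<nu> = - \<mu>" by (simp add: complex_eq_iff p_def q_def r_def s_def)
  obtain x where xi: "x \<in> interior K" using b(3) by blast
  then obtain e where e: "e > 0" "ball x e \<subseteq> K" using open_contains_ball by (meson open_interior interior_subset subset_trans)
  have "x + of_real (e/2) * \<mu> \<in> ball x e" using e mu1 by (simp add: dist_norm norm_mult)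
  then have xe: "x + of_real (e/2) * \<mu> \<in> K" using e by blast
  have xK: "x \<in> K" using xi interior_subset by blast
  have "Re ((x - \<zeta>) * cnj \<mu>) = 0" using muK nuK xK by (fastforce simp: nmu)
  moreover have "Re ((x + of_real (e/2) * \<mu> - \<zeta>) * cnj \<mu>) \<le> 0" using muK xe by blast
  moreover have "Re ((x + of_real (e/2) * \<mu> - \<zeta>) * cnj \<mu>) = Re ((x - \<zeta>) * cnj \<mu>) + e/2"
  proof -
    have "Re \<mu> * Re \<mu> = 1 - Im \<mu> * Im \<mu>" using e1 by (simp add: p_def q_def power2_eq_square)
    have X: "e * (Im \<mu> * (Im \<mu> * 2)) + e * (Re \<mu> * (Re \<mu> * 2)) = (2 * e) * (Im \<mu> * Im \<mu> + Re \<mu> * Re \<mu>)"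
      by (simp add: algebra_simps)
    have Y: "Im \<mu> * Im \<mu> + Re \<mu> * Re \<mu> = 1" using e1 by (simp add: p_def q_def power2_eq_square)
    show ?thesis apply (simp add: algebra_simps) using X Y by simp
  qed
  ultimately show False using e by simp
qed

lemma uniform:
  assumes sm: "smooth_convex_domain K"
  shows "\<exists>s>0. \<forall>\<zeta>\<in>frontier K. \<forall>\<mu>. outer_normal K \<zeta> \<mu> \<longrightarrow> \<zeta> - of_real s * \<mu> \<in> K"
proof (rule ccontr)
  assume H: "\<not> ?thesis"
  note b = basic[OF sm]
  have "\<exists>\<zeta> \<mu>. \<zeta> \<in> frontier K \<and> outer_normal K \<zeta> \<mu> \<and> \<zeta> - of_real (1 / Suc n) * \<mu> \<notin> K" for n :: nat
  proof -
    have "(1::real) / Suc n > 0" by simp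
    then show ?thesis using H by blast
  qed
  then obtain Z M where ZM: "\<And>n. Z n \<in> frontier K \<and> outer_normal K (Z n) (M n) \<and> Z n - of_real (1 / Suc n) * M n \<notin> K"
    by metis
  define S where "S = frontier K \<times> sphere (0::complex) 1"
  have cS: "compact S" unfolding S_def using b(1) by (intro compact_Times) auto
  have inS: "\<forall>n. (Z n, M n) \<in> S" using ZM by (auto simp: S_def outer_normal_def)
  obtain l r where lS: "l \<in> S" and r: "strict_mono (r :: nat \<Rightarrow> nat)"
    and lim: "((\<lambda>n. (Z n, M n)) \<circ> r) \<longlonglongrightarrow> l"
    using seq_compactE[OF compact_imp_seq_compact[OF cS] inS] by blast
  obtain \<zeta> \<mu> where l: "l = (\<zeta>, \<mu>)" by fastforce
  have lz: "(\<lambda>n. Z (r n)) \<longlonglongrightarrow> \<zeta>" using tendsto_fst[OF lim] by (simp add: l o_def)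
  have lm: "(\<lambda>n. M (r n)) \<longlonglongrightarrow> \<mu>" using tendsto_snd[OF lim] by (simp add: l o_def)
  have zf: "\<zeta> \<in> frontier K" and mu1: "norm \<mu> = 1" using lS by (auto simp: S_def l)
  have "Re ((z - \<zeta>) * cnj \<mu>) \<le> 0" if "z \<in> K" for z
  proof (rule LIMSEQ_le_const2)
    show "(\<lambda>n. Re ((z - Z (r n)) * cnj (M (r n)))) \<longlonglongrightarrow> Re ((z - \<zeta>) * cnj \<mu>)"
      by (intro tendsto_intros lz lm)
    show "\<exists>N. \<forall>n\<ge>N. Re ((z - Z (r n)) * cnj (M (r n))) \<le> 0"
      using ZM that by (auto simp: outer_normal_def)
  qed
  then have on: "outer_normal K \<zeta> \<mu>" using mu1 by (auto simp: outer_normal_def)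
  obtain s0 where s0: "s0 > 0" "\<zeta> - of_real s0 * \<mu> \<in> interior K" using key[OF sm zf on] by blast
  have "(\<lambda>n. Z (r n) - of_real s0 * M (r n)) \<longlonglongrightarrow> \<zeta> - of_real s0 * \<mu>"
    by (intro tendsto_intros lz lm)
  then have ev1: "eventually (\<lambda>n. Z (r n) - of_real s0 * M (r n) \<in> interior K) sequentially"
    using s0(2) by (rule topological_tendstoD[OF _ open_interior])
  obtain N where N: "inverse (real (Suc N)) < s0" using reals_Archimedean[OF s0(1)] by blast
  have ev2: "eventually (\<lambda>n. 1 / real (Suc (r n)) < s0) sequentially"
    unfolding eventually_sequentially
  proof (intro exI allI impI)
    fix n assume "N \<le> n"
    then have "N \<le> r n" using seq_suble[OF r, of n] by linarith
    then have "1 / real (Suc (r n)) \<le> inverse (real (Suc N))"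
      by (simp add: divide_simps)
    then show "1 / real (Suc (r n)) < s0" using N by linarith
  qed
  obtain n where n1: "Z (r n) - of_real s0 * M (r n) \<in> interior K" and n2: "1 / real (Suc (r n)) < s0"
    using eventually_happens[OF eventually_conj[OF ev1 ev2]] by auto
  define t where "t = 1 / real (Suc (r n))"
  have t0: "t > 0" "t < s0" using n2 by (auto simp: t_def)
  have zK: "Z (r n) \<in> K" using b(6) ZM by blast
  have yK: "Z (r n) - of_real s0 * M (r n) \<in> K" using n1 interior_subset by blast
  have "(1 - t / s0) *\<^sub>R Z (r n) + (t / s0) *\<^sub>R (Z (r n) - of_real s0 * M (r n)) \<in> K"
    using t0 s0 by (intro convexD[OF b(2) zK yK]) auto
  moreover have "(1 - t / s0) *\<^sub>R Z (r n) + (t / s0) *\<^sub>R (Z (r n) - of_real s0 * M (r n))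
      = Z (r n) - of_real t * M (r n)"
    using s0 by (simp add: scaleR_conv_of_real algebra_simps)
  ultimately show False using ZM[of "r n"] by (simp add: t_def)
qed

lemma re_norm1: "norm \<mu> = 1 \<Longrightarrow> Re (of_real t * \<mu> * cnj \<mu>) = t"
proof -
  assume "norm \<mu> = 1"
  then have "\<mu> * cnj \<mu> = 1" using complex_norm_square[of \<mu>] by simp
  then show ?thesis by (simp add: mult.assoc)
qed

lemma chord:
  assumes sm: "smooth_convex_domain K" and zf: "\<zeta> \<in> frontier K" and on: "outer_normal K \<zeta> \<mu>"
  shows "\<exists>h\<ge>0. {\<zeta> + complex_of_real t * \<mu> | t. True} \<inter> K = closed_segment \<zeta> (\<zeta> - complex_of_real h * \<mu>)"
proof -
  note b = basic[OF sm]
  have zK: "\<zeta> \<in> K" using b(6)[OF zf] by auto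
  have mu1: "norm \<mu> = 1" and muK: "\<forall>z\<in>K. Re ((z - \<zeta>) * cnj \<mu>) \<le> 0"
    using on by (auto simp: outer_normal_def)
  define f where "f = (\<lambda>t::real. \<zeta> + complex_of_real t * \<mu>)"
  define T where "T = f -` K"
  have T0: "0 \<in> T" using zK by (simp add: T_def f_def)
  have Tle: "t \<le> 0" if "t \<in> T" for t
  proof -
    have "Re ((f t - \<zeta>) * cnj \<mu>) \<le> 0" using muK that by (auto simp: T_def)
    then show ?thesis using re_norm1[OF mu1, of t] by (simp add: f_def)
  qed
  have cT: "closed T" unfolding T_def f_def
    by (intro continuous_closed_vimage b(4)) (intro continuous_intros)
  obtain B where B: "\<forall>x\<in>K. norm x \<le> B" using b(5) bounded_iff by blast
  have Tge: "- (B + norm \<zeta>) \<le> t" if "t \<in> T" for t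
  proof -
    have "norm (f t) \<le> B" using B that by (auto simp: T_def)
    moreover have "norm (f t - \<zeta>) = \<bar>t\<bar>" using mu1 by (simp add: f_def norm_mult)
    moreover have "norm (f t - \<zeta>) \<le> norm (f t) + norm \<zeta>" by (rule norm_triangle_ineq4)
    ultimately show ?thesis by linarith
  qed
  have bT: "bdd_below T" using Tge by (auto simp: bdd_below_def)
  define m where "m = Inf T"
  have mT: "m \<in> T" unfolding m_def using closed_contains_Inf[OF _ bT cT] T0 by blast
  have m0: "m \<le> 0" using Tle mT by blast
  have mle: "m \<le> t" if "t \<in> T" for t unfolding m_def using cInf_lower[OF that bT] .
  have fmK: "f m \<in> K" using mT by (simp add: T_def)
  have fm: "\<zeta> - complex_of_real (- m) * \<mu> = f m" by (simp add: f_def)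
  show ?thesis
  proof (intro exI[of _ "- m"] conjI)
    show "0 \<le> - m" using m0 by simp
    show "{\<zeta> + complex_of_real t * \<mu> | t. True} \<inter> K = closed_segment \<zeta> (\<zeta> - complex_of_real (- m) * \<mu>)"
      unfolding fm
    proof (intro equalityI subsetI)
      fix z assume "z \<in> {\<zeta> + complex_of_real t * \<mu> | t. True} \<inter> K"
      then obtain t where zt: "z = f t" and tT: "t \<in> T" by (auto simp: T_def f_def)
      have t1: "m \<le> t" "t \<le> 0" using mle Tle tT by auto
      show "z \<in> closed_segment \<zeta> (f m)"
      proof (cases "m = 0")
        case True
        then have "t = 0" using t1 by simp
        then show ?thesis by (simp add: zt f_def)
      next
        case False
        then have mn: "m < 0" using m0 by simp
        define u where "u = t / m"
        have u: "0 \<le> u" "u \<le> 1" using t1 mn by (auto simp: u_def divide_simps)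
        have um: "u * m = t" using mn by (simp add: u_def)
        have "(1 - u) *\<^sub>R \<zeta> + u *\<^sub>R f m = \<zeta> + complex_of_real (u * m) * \<mu>"
          by (simp add: f_def scaleR_conv_of_real algebra_simps)
        then have "(1 - u) *\<^sub>R \<zeta> + u *\<^sub>R f m = z" by (simp add: um zt f_def)
        then show ?thesis using u unfolding closed_segment_def by blast
      qed
    next
      fix z assume zs: "z \<in> closed_segment \<zeta> (f m)"
      then have "z \<in> K" using closed_segment_subset[OF zK fmK b(2)] by blast
      moreover obtain u where "z = (1 - u) *\<^sub>R \<zeta> + u *\<^sub>R f m" using zs unfolding closed_segment_def by blast
      then have "z = \<zeta> + complex_of_real (u * m) * \<mu>" by (simp add: f_def scaleR_conv_of_real algebra_simps)
      ultimately show "z \<in> {\<zeta> + complex_of_real t * \<mu> | t. True} \<inter> K" by blast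
    qed
  qed
qed

lemma exists_normal:
  assumes sm: "smooth_convex_domain K" and zf: "\<zeta> \<in> frontier K"
  shows "\<exists>\<mu>. outer_normal K \<zeta> \<mu>"
proof -
  note b = basic[OF sm]
  have zK: "\<zeta> \<in> K" and zni: "\<zeta> \<notin> interior K" using b(6)[OF zf] by auto
  have "\<zeta> \<notin> rel_interior K" using zni rel_interior_nonempty_interior[OF b(3)] by simp
  then obtain a where a0: "a \<noteq> 0" and aK: "\<And>y. y \<in> K \<Longrightarrow> a \<bullet> \<zeta> \<le> a \<bullet> y"
    using supporting_hyperplane_rel_boundary[OF b(2) zK] by metis
  define \<mu> where "\<mu> = - a / of_real (norm a)"
  have nre: "Re (w * cnj \<mu>) = - inner w a / norm a" for w
    by (simp add: \<mu>_def inner_complex_def, simp add: add_divide_distrib diff_divide_distrib)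
  have "norm \<mu> = 1" using a0 by (simp add: \<mu>_def norm_divide)
  moreover have "\<forall>z\<in>K. Re ((z - \<zeta>) * cnj \<mu>) \<le> 0"
  proof
    fix z assume "z \<in> K"
    then have "a \<bullet> \<zeta> \<le> a \<bullet> z" by (rule aK)
    then have "0 \<le> inner (z - \<zeta>) a" by (metis inner_diff_left inner_commute diff_ge_0_iff_ge)
    then show "Re ((z - \<zeta>) * cnj \<mu>) \<le> 0" unfolding nre by (simp add: divide_le_0_iff)
  qed
  ultimately show ?thesis unfolding outer_normal_def by blast
qed

theorem corollary1:
  fixes K :: "complex set"
  assumes "smooth_convex_domain K"
  shows "depth K > 0"
proof -
  note sm = assms
  note b = basic[OF sm]
  obtain s where s0: "s > 0" and sK: "\<forall>\<zeta>\<in>frontier K. \<forall>\<mu>. outer_normal K \<zeta> \<mu> \<longrightarrow> \<zeta> - of_real s * \<mu> \<in> K"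
    using uniform[OF sm] by blast
  obtain B where B: "\<forall>x\<in>K. norm x \<le> B" using b(5) bounded_iff by blast
  have ld: "s \<le> local_depth K \<zeta>" if zf: "\<zeta> \<in> frontier K" for \<zeta>
  proof -
    have zK: "\<zeta> \<in> K" using b(6)[OF zf] by auto
    obtain \<mu> where on: "outer_normal K \<zeta> \<mu>" using exists_normal[OF sm zf] by blast
    have mu1: "norm \<mu> = 1" using on by (simp add: outer_normal_def)
    obtain h where h0: "h \<ge> 0" and hs: "{\<zeta> + complex_of_real t * \<mu> | t. True} \<inter> K = closed_segment \<zeta> (\<zeta> - complex_of_real h * \<mu>)"
      using chord[OF sm zf on] by blast
    define H where "H = {h. h \<ge> 0 \<and> (\<exists>\<nu>. outer_normal K \<zeta> \<nu> \<and>
      {\<zeta> + complex_of_real t * \<nu> | t. True} \<inter> K = closed_segment \<zeta> (\<zeta> - complex_of_real h * \<nu>))}"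
    have hH: "h \<in> H" unfolding H_def using h0 hs on by blast
    have bH: "bdd_above H"
    proof (rule bdd_aboveI)
      fix h' assume "h' \<in> H"
      then obtain \<nu> where "h' \<ge> 0" "outer_normal K \<zeta> \<nu>" and e: "{\<zeta> + complex_of_real t * \<nu> | t. True} \<inter> K = closed_segment \<zeta> (\<zeta> - complex_of_real h' * \<nu>)"
        unfolding H_def by blast
      then have nu1: "norm \<nu> = 1" by (simp add: outer_normal_def)
      have "\<zeta> - complex_of_real h' * \<nu> \<in> K" using e ends_in_segment(2) by blast
      then have "norm (\<zeta> - complex_of_real h' * \<nu>) \<le> B" using B by blast
      moreover have "norm (complex_of_real h' * \<nu>) \<le> norm \<zeta> + norm (\<zeta> - complex_of_real h' * \<nu>)"
        by (metis add_diff_cancel_left' diff_add_cancel norm_triangle_ineq4 norm_minus_commute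
            add.commute norm_diff_ineq order_trans norm_triangle_sub)
      moreover have "norm (complex_of_real h' * \<nu>) = h'" using nu1 \<open>h' \<ge> 0\<close> by (simp add: norm_mult)
      moreover have "norm \<zeta> \<le> B" using B zK by blast
      ultimately show "h' \<le> 2 * B" by linarith
    qed
    have "\<zeta> - of_real s * \<mu> \<in> K" using sK zf on by blast
    moreover have "\<zeta> - of_real s * \<mu> = \<zeta> + complex_of_real (- s) * \<mu>" by simp
    ultimately have "\<zeta> - of_real s * \<mu> \<in> closed_segment \<zeta> (\<zeta> - complex_of_real h * \<mu>)"
      using hs by blast
    then obtain u where u: "0 \<le> u" "u \<le> 1"
      and eq: "\<zeta> - of_real s * \<mu> = (1 - u) *\<^sub>R \<zeta> + u *\<^sub>R (\<zeta> - complex_of_real h * \<mu>)"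
      unfolding closed_segment_def by blast
    from eq have "of_real s * \<mu> = of_real (u * h) * \<mu>" by (simp add: scaleR_conv_of_real algebra_simps; metis)
    then have "complex_of_real s = complex_of_real (u * h)" using mu1
      by (metis mult_cancel_right norm_zero zero_neq_one)
    then have "s = u * h" by (simp only: of_real_eq_iff)
    also have "\<dots> \<le> h" using u h0 by (simp add: mult_left_le_one_le)
    also have "h \<le> Sup H" by (rule cSup_upper[OF hH bH])
    finally show ?thesis by (simp add: local_depth_def H_def)
  qed
  have fne: "frontier K \<noteq> {}"
  proof (rule frontier_not_empty)
    show "K \<noteq> {}" using b(3) interior_subset by blast
    show "K \<noteq> UNIV" using b(5) not_bounded_UNIV by blast
  qed
  have "s \<le> depth K" unfolding depth_def
    using fne ld by (intro cInf_greatest) auto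
  then show ?thesis using s0 by linarith
qed

end
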